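(* Let $\mathcal{K}$ be a statistical $\mathcal{ALC}$ knowledge base and $C, D$ arbitrary $\mathcal{ALC}$ concepts. Suppose there exist $\mathcal{I}_0, \mathcal{I}_1 \in \mathrm{Mod}(\mathcal{K})$ with $[D]^{\mathcal{I}_0} > 0$, $[D]^{\mathcal{I}_1} > 0$ and $$r_0 = \frac{[C \sqcap D]^{\mathcal{I}_0}}{[D]^{\mathcal{I}_0}} < \frac{[C \sqcap D]^{\mathcal{I}_1}}{[D]^{\mathcal{I}_1}} = r_1 .$$ Then there exists $\mathcal{I}_{0.5} \in \mathrm{Mod}(\mathcal{K})$ with $[D]^{\mathcal{I}_{0.5}} > 0$ and $\frac{[C \sqcap D]^{\mathcal{I}_{0.5}}}{[D]^{\mathcal{I}_{0.5}}} = \frac{r_0 + r_1}{2}$.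
   Context: $\mathcal{ALC}$ concepts over disjoint sets $N_C$, $N_R$: $C ::= \top \mid A \mid \neg C \mid C \sqcap C \mid \exists r.C$, standard semantics. Interpretations $\mathcal{I} = (\Delta^{\mathcal{I}}, \cdot^{\mathcal{I}})$ have non-empty finite domain; $[X]^{\mathcal{I}} := |X^{\mathcal{I}}|$. A conditional is $(C \mid D)[\ell,u]$ with concepts $C,D$ and rationals $0 \le \ell \le u \le 1$; $\mathcal{I} \models (C \mid D)[\ell,u]$ iff $[D]^{\mathcal{I}} = 0$ or $[C \sqcap D]^{\mathcal{I}}/[D]^{\mathcal{I}} \in [\ell,u]$. A statistical $\mathcal{ALC}$ knowledge base $\mathcal{K}$ is a finite set of conditionals; $\mathrm{Mod}(\mathcal{K})$ is the set of finite interpretations satisfying all of them. *)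

theory Defs
  imports Complex_Main
begin

datatype ('c, 'r) concept =
    Top
  | CName 'c
  | Neg "('c, 'r) concept"
  | Conj "('c, 'r) concept" "('c, 'r) concept"
  | Ex 'r "('c, 'r) concept"

text \<open>Domain elements are natural numbers (every finite
interpretation is isomorphic to one of this form).\<close>
record ('c, 'r) interp =
  dom :: "nat set"
  cint :: "'c \<Rightarrow> nat set"
  rint :: "'r \<Rightarrow> (nat \<times> nat) set"

definition wf_interp :: "('c, 'r) interp \<Rightarrow> bool" where
  "wf_interp I \<longleftrightarrow> finite (dom I) \<and> dom I \<noteq> {} \<and>
     (\<forall>A. cint I A \<subseteq> dom I) \<and> (\<forall>r. rint I r \<subseteq> dom I \<times> dom I)"

fun ext :: "('c, 'r) interp \<Rightarrow> ('c, 'r) concept \<Rightarrow> nat set" where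
  "ext I Top = dom I"
| "ext I (CName A) = cint I A"
| "ext I (Neg C) = dom I - ext I C"
| "ext I (Conj C D) = ext I C \<inter> ext I D"
| "ext I (Ex r C) = {x \<in> dom I. \<exists>y. (x, y) \<in> rint I r \<and> y \<in> ext I C}"

definition cnt :: "('c, 'r) interp \<Rightarrow> ('c, 'r) concept \<Rightarrow> nat" where
  "cnt I C = card (ext I C)"

record ('c, 'r) conditional =
  ccons :: "('c, 'r) concept"
  cante :: "('c, 'r) concept"
  lo :: rat
  up :: rat

definition wf_conditional :: "('c, 'r) conditional \<Rightarrow> bool" where
  "wf_conditional k \<longleftrightarrow> 0 \<le> lo k \<and> lo k \<le> up k \<and> up k \<le> 1"

definition sat_cond :: "('c, 'r) interp \<Rightarrow> ('c, 'r) conditional \<Rightarrow> bool" where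
  "sat_cond I k \<longleftrightarrow> cnt I (cante k) = 0 \<or>
     (real (cnt I (Conj (ccons k) (cante k))) / real (cnt I (cante k)) \<in>
        {real_of_rat (lo k) .. real_of_rat (up k)})"

definition is_KB :: "('c, 'r) conditional set \<Rightarrow> bool" where
  "is_KB K \<longleftrightarrow> finite K \<and> (\<forall>k\<in>K. wf_conditional k)"

definition Mod :: "('c, 'r) conditional set \<Rightarrow> ('c, 'r) interp set" where
  "Mod K = {I. wf_interp I \<and> (\<forall>k\<in>K. sat_cond I k)}"

end

theory Submission
  imports Defs
begin

definition U :: "('c, 'r) interp \<Rightarrow> ('c, 'r) interp \<Rightarrow> ('c, 'r) interp" where
  "U I J = \<lparr>dom = (\<lambda>x. 2*x) ` dom I \<union> (\<lambda>x. 2*x+1) ` dom J,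
     cint = (\<lambda>A. (\<lambda>x. 2*x) ` cint I A \<union> (\<lambda>x. 2*x+1) ` cint J A),
     rint = (\<lambda>r. map_prod (\<lambda>x. 2*x) (\<lambda>x. 2*x) ` rint I r \<union> map_prod (\<lambda>x. 2*x+1) (\<lambda>x. 2*x+1) ` rint J r)\<rparr>"

lemma ext_sub: "wf_interp I \<Longrightarrow> ext I C \<subseteq> dom I"
  by (induction C) (auto simp: wf_interp_def)

lemma wf_U: "wf_interp I \<Longrightarrow> wf_interp J \<Longrightarrow> wf_interp (U I J)"
  unfolding wf_interp_def U_def by fastforce

lemma odd_even_aux: "(2*(x::nat) = 2*y+1) = False" "(2*(x::nat) = Suc (2*y)) = False" "(Suc (2*y) = 2*(x::nat)) = False" by presburger+

lemma ext_U: assumes "wf_interp I" "wf_interp J"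
  shows "ext (U I J) C = (\<lambda>x. 2*x) ` ext I C \<union> (\<lambda>x. 2*x+1) ` ext J C"
proof (induction C)
  case Top then show ?case by (simp add: U_def)
next
  case (CName A) then show ?case by (simp add: U_def)
next
  case (Neg C)
  have s1: "ext I C \<subseteq> dom I" "ext J C \<subseteq> dom J" using ext_sub assms by auto
  show ?case using Neg s1 by (auto simp: U_def odd_even_aux)
next
  case (Conj C1 C2) then show ?case by (auto simp: odd_even_aux)
next
  case (Ex r C)
  have r: "rint I r \<subseteq> dom I \<times> dom I" "rint J r \<subseteq> dom J \<times> dom J" using assms by (auto simp: wf_interp_def)
  show ?case
  proof (rule set_eqI)
    fix z
    show "z \<in> ext (U I J) (Ex r C) \<longleftrightarrow> z \<in> (\<lambda>x. 2*x) ` ext I (Ex r C) \<union> (\<lambda>x. 2*x+1) ` ext J (Ex r C)"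
    proof (cases "even z")
      case True
      then obtain x where z: "z = 2*x" by (auto elim: evenE)
      show ?thesis unfolding z using Ex r by (auto simp: U_def odd_even_aux image_iff; force)
    next
      case False
      then obtain x where z: "z = 2*x+1" by (auto elim: oddE)
      show ?thesis unfolding z using Ex r by (auto simp: U_def odd_even_aux image_iff; force)
    qed
  qed
qed

lemma ext_fin: "wf_interp I \<Longrightarrow> finite (ext I C)"
  using ext_sub[of I C] by (auto simp: wf_interp_def intro: finite_subset)

lemma cnt_U: assumes "wf_interp I" "wf_interp J"
  shows "cnt (U I J) C = cnt I C + cnt J C"
proof -
  have "card ((\<lambda>x. 2*x) ` ext I C \<union> (\<lambda>x. 2*x+1) ` ext J C) =
        card ((\<lambda>x::nat. 2*x) ` ext I C) + card ((\<lambda>x. 2*x+1) ` ext J C)"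
    by (rule card_Un_disjoint) (use ext_fin assms in \<open>auto simp: odd_even_aux\<close>)
  also have "\<dots> = card (ext I C) + card (ext J C)"
    by (simp add: card_image inj_on_def)
  finally show ?thesis unfolding cnt_def ext_U[OF assms] .
qed

lemma sat_iff: assumes "wf_interp I"
  shows "sat_cond I k \<longleftrightarrow>
    real_of_rat (lo k) * real (cnt I (cante k)) \<le> real (cnt I (Conj (ccons k) (cante k))) \<and>
    real (cnt I (Conj (ccons k) (cante k))) \<le> real_of_rat (up k) * real (cnt I (cante k))"
proof -
  have "cnt I (Conj (ccons k) (cante k)) \<le> cnt I (cante k)"
    unfolding cnt_def using ext_fin[OF assms] by (auto intro: card_mono)
  then show ?thesis unfolding sat_cond_def
    by (cases "cnt I (cante k) = 0") (auto simp: pos_le_divide_eq pos_divide_le_eq)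
qed

lemma Mod_U: assumes "I \<in> Mod K" "J \<in> Mod K" shows "U I J \<in> Mod K"
proof -
  have w: "wf_interp I" "wf_interp J" using assms by (auto simp: Mod_def)
  show ?thesis using assms wf_U[OF w] unfolding Mod_def
    by (auto simp: sat_iff w cnt_U distrib_left intro!: add_mono)
qed

fun copies :: "('c, 'r) interp \<Rightarrow> nat \<Rightarrow> ('c, 'r) interp" where
  "copies I 0 = I"
| "copies I (Suc n) = U I (copies I n)"

lemma copies: assumes "I \<in> Mod K"
  shows "copies I n \<in> Mod K \<and> cnt (copies I n) C = Suc n * cnt I C"
proof (induction n)
  case 0 then show ?case using assms by simp
next
  case (Suc n)
  have "wf_interp I" "wf_interp (copies I n)" using assms Suc by (auto simp: Mod_def)
  then show ?case using Suc assms Mod_U[OF assms, of "copies I n"] by (simp add: cnt_U)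
qed

theorem mainTheorem3:
  fixes K :: "('c, 'r) conditional set" and C D :: "('c, 'r) concept"
    and I0 I1 :: "('c, 'r) interp"
  assumes "is_KB K"
    and "I0 \<in> Mod K" and "I1 \<in> Mod K"
    and "cnt I0 D > 0" and "cnt I1 D > 0"
    and "real (cnt I0 (Conj C D)) / real (cnt I0 D) < real (cnt I1 (Conj C D)) / real (cnt I1 D)"
  shows "\<exists>I. I \<in> Mod K \<and> cnt I D > 0 \<and>
           real (cnt I (Conj C D)) / real (cnt I D) =
             (real (cnt I0 (Conj C D)) / real (cnt I0 D) + real (cnt I1 (Conj C D)) / real (cnt I1 D)) / 2"
proof -
  define d0 where "d0 = cnt I0 D"
  define d1 where "d1 = cnt I1 D"
  define a0 where "a0 = cnt I0 (Conj C D)"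
  define a1 where "a1 = cnt I1 (Conj C D)"
  define A where "A = copies I0 (d1 - 1)"
  define B where "B = copies I1 (d0 - 1)"
  have d: "d0 > 0" "d1 > 0" using assms d0_def d1_def by auto
  have A: "A \<in> Mod K" "\<And>X. cnt A X = d1 * cnt I0 X"
    using copies[OF assms(2), of "d1 - 1"] d A_def by auto
  have B: "B \<in> Mod K" "\<And>X. cnt B X = d0 * cnt I1 X"
    using copies[OF assms(3), of "d0 - 1"] d B_def by auto
  have w: "wf_interp A" "wf_interp B" using A B by (auto simp: Mod_def)
  have cD: "cnt (U A B) D = 2 * d0 * d1" using cnt_U[OF w] A B d0_def d1_def by simp
  have cC: "cnt (U A B) (Conj C D) = d1 * a0 + d0 * a1" using cnt_U[OF w] A B a0_def a1_def by simp
  have eq: "real (d1 * a0 + d0 * a1) / real (2 * d0 * d1) = (real a0 / real d0 + real a1 / real d1) / 2"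
    using d by (simp add: field_simps)
  show ?thesis
    by (rule exI[of _ "U A B"]) (use Mod_U[OF A(1) B(1)] cD cC eq d in \<open>simp add: a0_def a1_def d0_def d1_def\<close>)
qed

end
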